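(* Let $U$ be a nonempty finite set and let $R\subseteq U\times U$ be a serial and transitive relation. Then $(Reg(U,R),\subseteq)$ is a semimodular lattice; that is, it is a lattice and for all $X,Y\in Reg(U,R)$, if $Y$ covers $X\wedge Y$ then $X\vee Y$ covers $X$.
   Context: For $x\in U$, the successor neighborhood is $R_s(x)=\{y\in U\mid xRy\}$. $R$ is serial if for every $x\in U$ there is $y\in U$ with $xRy$; $R$ is transitive if $xRy$ and $yRz$ imply $xRz$. For $X\subseteq U$, the lower and upper approximations are $\underline{R}(X)=\{x\in U\mid R_s(x)\subseteq X\}$ and $\overline{R}(X)=\{x\in U\mid R_s(x)\cap X\neq\emptyset\}$. A set $X\subseteq U$ is a regular set if $X=\underline{R}(\overline{R}(X))$; $Reg(U,R)$ denotes the collection of all regular sets, ordered by inclusion. In a poset, $b$ covers $a$ if $a<b$ and there is no $c$ with $a<c<b$. *)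

theory Defs
  imports Main
begin

definition succ_nbhd :: "'a set \<Rightarrow> ('a \<times> 'a) set \<Rightarrow> 'a \<Rightarrow> 'a set" where
  "succ_nbhd U R x = {y \<in> U. (x, y) \<in> R}"

definition lower_approx :: "'a set \<Rightarrow> ('a \<times> 'a) set \<Rightarrow> 'a set \<Rightarrow> 'a set" where
  "lower_approx U R X = {x \<in> U. succ_nbhd U R x \<subseteq> X}"

definition upper_approx :: "'a set \<Rightarrow> ('a \<times> 'a) set \<Rightarrow> 'a set \<Rightarrow> 'a set" where
  "upper_approx U R X = {x \<in> U. succ_nbhd U R x \<inter> X \<noteq> {}}"

definition serial_on :: "'a set \<Rightarrow> ('a \<times> 'a) set \<Rightarrow> bool" where
  "serial_on U R \<longleftrightarrow> (\<forall>x\<in>U. \<exists>y\<in>U. (x, y) \<in> R)"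

definition Reg :: "'a set \<Rightarrow> ('a \<times> 'a) set \<Rightarrow> 'a set set" where
  "Reg U R = {X. X \<subseteq> U \<and> X = lower_approx U R (upper_approx U R X)}"

definition is_meet_in :: "'a set set \<Rightarrow> 'a set \<Rightarrow> 'a set \<Rightarrow> 'a set \<Rightarrow> bool" where
  "is_meet_in S a b m \<longleftrightarrow> m \<in> S \<and> m \<subseteq> a \<and> m \<subseteq> b \<and>
     (\<forall>z\<in>S. z \<subseteq> a \<and> z \<subseteq> b \<longrightarrow> z \<subseteq> m)"

definition is_join_in :: "'a set set \<Rightarrow> 'a set \<Rightarrow> 'a set \<Rightarrow> 'a set \<Rightarrow> bool" where
  "is_join_in S a b j \<longleftrightarrow> j \<in> S \<and> a \<subseteq> j \<and> b \<subseteq> j \<and>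
     (\<forall>z\<in>S. a \<subseteq> z \<and> b \<subseteq> z \<longrightarrow> j \<subseteq> z)"

definition covers_in :: "'a set set \<Rightarrow> 'a set \<Rightarrow> 'a set \<Rightarrow> bool" where
  "covers_in S a b \<longleftrightarrow> a \<in> S \<and> b \<in> S \<and> a \<subset> b \<and> \<not> (\<exists>c\<in>S. a \<subset> c \<and> c \<subset> b)"

end

theory Submission
  imports Defs
begin

locale regctx =
  fixes U :: "'a set" and R :: "('a \<times> 'a) set"
  assumes fin: "finite U" and sub: "R \<subseteq> U \<times> U"
    and ser: "serial_on U R" and tr: "trans R"
begin

definition T where "T = {z\<in>U. \<forall>w. (z,w)\<in>R \<longrightarrow> (w,z)\<in>R}"
definition g where "g A = {x\<in>U. \<forall>z\<in>T. (x,z)\<in>R \<longrightarrow> z\<in>A}"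

lemma trR: "(a,b)\<in>R \<Longrightarrow> (b,c)\<in>R \<Longrightarrow> (a,c)\<in>R"
  using tr by (meson transD)

lemma F1: assumes "x \<in> U" shows "\<exists>z\<in>T. (x,z)\<in>R"
proof -
  let ?N = "\<lambda>y. R `` {y}"
  have finN: "finite (?N y)" for y using fin sub finite_subset by fastforce
  obtain y0 where "(x,y0)\<in>R" using ser assms unfolding serial_on_def by blast
  then obtain y where y: "(x,y)\<in>R" and ymin: "\<forall>v. (x,v)\<in>R \<longrightarrow> card (?N y) \<le> card (?N v)"
    using ex_has_least_nat[of "\<lambda>v. (x,v)\<in>R" y0 "\<lambda>v. card (?N v)"] by blast
  have eq: "?N v = ?N y" if "(y,v)\<in>R" for v
  proof -
    have "?N v \<subseteq> ?N y" using that trR by blast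
    moreover have "card (?N y) \<le> card (?N v)" using ymin trR[OF y that] by blast
    ultimately show ?thesis using card_subset_eq finN by (metis antisym card_mono)
  qed
  have yU: "y \<in> U" using y sub by blast
  obtain w where w: "(y,w)\<in>R" using ser yU unfolding serial_on_def by blast
  have wU: "w \<in> U" using w sub by blast
  have ww: "?N w = ?N y" using eq w .
  have "w \<in> T" unfolding T_def
  proof (intro CollectI conjI allI impI)
    show "w \<in> U" by fact
    fix v assume "(w,v)\<in>R"
    then have "(y,v)\<in>R" using trR w by blast
    then have "?N v = ?N y" using eq by blast
    then show "(v,w)\<in>R" using w by blast
  qed
  moreover have "(x,w)\<in>R" using trR y w by blast
  ultimately show ?thesis by blast
qed

lemma T_refl: "z\<in>T \<Longrightarrow> (z,z)\<in>R"
  using ser trR unfolding T_def serial_on_def by blast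

lemma T_closed: "z\<in>T \<Longrightarrow> (z,w)\<in>R \<Longrightarrow> w\<in>T"
  using trR sub unfolding T_def by blast

lemma C: assumes "X \<in> Reg U R" shows "X = g X"
proof -
  have X: "X \<subseteq> U" "X = lower_approx U R (upper_approx U R X)"
    using assms unfolding Reg_def by auto
  have mem0: "x \<in> lower_approx U R (upper_approx U R X) \<longleftrightarrow> x\<in>U \<and> (\<forall>y. (x,y)\<in>R \<longrightarrow> (\<exists>w. (y,w)\<in>R \<and> w\<in>X))" for x
    using sub unfolding lower_approx_def upper_approx_def succ_nbhd_def by blast
  have mem: "x \<in> X \<longleftrightarrow> x\<in>U \<and> (\<forall>y. (x,y)\<in>R \<longrightarrow> (\<exists>w. (y,w)\<in>R \<and> w\<in>X))" for x
    by (subst (1) X(2)) (rule mem0)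
  show ?thesis
  proof (intro set_eqI iffI)
    fix x assume x: "x \<in> X"
    show "x \<in> g X" unfolding g_def
    proof (intro CollectI conjI ballI impI)
      show "x\<in>U" using x X by blast
      fix z assume z: "z\<in>T" "(x,z)\<in>R"
      then obtain w where w: "(z,w)\<in>R" "w\<in>X" using mem x by blast
      have "\<forall>y. (z,y)\<in>R \<longrightarrow> (\<exists>w. (y,w)\<in>R \<and> w\<in>X)"
      proof (intro allI impI)
        fix y assume "(z,y)\<in>R"
        then have "(y,z)\<in>R" using z unfolding T_def by blast
        then show "\<exists>w. (y,w)\<in>R \<and> w\<in>X" using w trR by blast
      qed
      then show "z \<in> X" using mem z unfolding T_def by blast
    qed
  next
    fix x assume x: "x \<in> g X"
    then have xU: "x\<in>U" and h: "\<forall>z\<in>T. (x,z)\<in>R \<longrightarrow> z\<in>X" unfolding g_def by auto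
    have "\<exists>w. (y,w)\<in>R \<and> w\<in>X" if "(x,y)\<in>R" for y
    proof -
      have "y\<in>U" using that sub by blast
      then obtain z where "z\<in>T" "(y,z)\<in>R" using F1 by blast
      then show ?thesis using h trR that by blast
    qed
    then show "x \<in> X" using mem xU by blast
  qed
qed

definition closedT where "closedT A \<longleftrightarrow> (\<forall>z\<in>T\<inter>A. \<forall>w. (z,w)\<in>R \<longrightarrow> w\<in>A)"

lemma gT: assumes "closedT A" "z \<in> T" shows "z \<in> g A \<longleftrightarrow> z \<in> A"
  using assms T_refl unfolding closedT_def g_def T_def by blast

lemma G: assumes "closedT A" shows "g A \<in> Reg U R"
proof -
  have "g A = lower_approx U R (upper_approx U R (g A))"
  proof (intro set_eqI iffI)
    fix x assume x: "x \<in> g A"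
    have "\<exists>w. (y,w)\<in>R \<and> w\<in>g A" if "(x,y)\<in>R" for y
    proof -
      have "y\<in>U" using that sub by blast
      then obtain z where z: "z\<in>T" "(y,z)\<in>R" using F1 by blast
      then have "z \<in> A" using x trR that unfolding g_def by blast
      then have "z \<in> g A" using gT assms z by blast
      then show ?thesis using z by blast
    qed
    then show "x \<in> lower_approx U R (upper_approx U R (g A))"
      using x sub unfolding lower_approx_def upper_approx_def succ_nbhd_def g_def by blast
  next
    fix x assume x: "x \<in> lower_approx U R (upper_approx U R (g A))"
    then have xU: "x\<in>U" and h: "\<forall>y. (x,y)\<in>R \<longrightarrow> (\<exists>w. (y,w)\<in>R \<and> w\<in>g A)"
      using sub unfolding lower_approx_def upper_approx_def succ_nbhd_def by blast+
    show "x \<in> g A" unfolding g_def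
    proof (intro CollectI conjI ballI impI)
      show "x\<in>U" by fact
      fix z assume z: "z\<in>T" "(x,z)\<in>R"
      then obtain w where w: "(z,w)\<in>R" "w\<in>g A" using h by blast
      have "w\<in>T" using T_closed z w by blast
      moreover have "(w,z)\<in>R" using z w unfolding T_def by blast
      moreover have "\<forall>z\<in>T. (w,z)\<in>R \<longrightarrow> z\<in>A" using w(2) unfolding g_def by blast
      ultimately show "z\<in>A" using z(1) by blast
    qed
  qed
  moreover have "g A \<subseteq> U" unfolding g_def by blast
  ultimately show ?thesis unfolding Reg_def by blast
qed

lemma closed_reg: assumes "X \<in> Reg U R" shows "closedT X"
proof -
  have "X = g X" using C assms .
  then show ?thesis unfolding closedT_def g_def using trR T_closed by blast
qed

lemma K: assumes "X \<in> Reg U R" "Y \<in> Reg U R" "X \<inter> T \<subseteq> Y" shows "X \<subseteq> Y"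
proof -
  have "g X \<subseteq> g Y" using assms(3) unfolding g_def by blast
  then show ?thesis using C assms by blast
qed

lemma meet_reg: assumes "X \<in> Reg U R" "Y \<in> Reg U R" shows "X \<inter> Y \<in> Reg U R"
proof -
  have "closedT (X \<inter> Y)" using closed_reg assms unfolding closedT_def by blast
  then have "g (X\<inter>Y) \<in> Reg U R" by (rule G)
  moreover have "g (X\<inter>Y) = X \<inter> Y" using C[OF assms(1)] C[OF assms(2)] unfolding g_def by blast
  ultimately show ?thesis by simp
qed

lemma join_props: assumes "X \<in> Reg U R" "Y \<in> Reg U R"
  shows "g (X\<union>Y) \<in> Reg U R" "X \<subseteq> g (X\<union>Y)" "Y \<subseteq> g (X\<union>Y)" "g (X\<union>Y) \<inter> T = (X\<union>Y)\<inter>T"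
proof -
  have cl: "closedT (X \<union> Y)" using closed_reg assms unfolding closedT_def by blast
  show "g (X\<union>Y) \<in> Reg U R" using G cl .
  show "X \<subseteq> g (X\<union>Y)" using C[OF assms(1)] unfolding g_def by blast
  show "Y \<subseteq> g (X\<union>Y)" using C[OF assms(2)] unfolding g_def by blast
  show "g (X\<union>Y) \<inter> T = (X\<union>Y)\<inter>T" using gT[OF cl] by blast
qed

end

theorem proposition1:
  fixes U :: "'a set" and R :: "('a \<times> 'a) set"
  assumes "finite U" and "U \<noteq> {}" and "R \<subseteq> U \<times> U"
    and "serial_on U R" and "trans R"
  shows "(\<forall>X\<in>Reg U R. \<forall>Y\<in>Reg U R.
            (\<exists>m. is_meet_in (Reg U R) X Y m) \<and> (\<exists>j. is_join_in (Reg U R) X Y j))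
       \<and> (\<forall>X\<in>Reg U R. \<forall>Y\<in>Reg U R. \<forall>m j.
            is_meet_in (Reg U R) X Y m \<longrightarrow> is_join_in (Reg U R) X Y j \<longrightarrow>
            covers_in (Reg U R) m Y \<longrightarrow> covers_in (Reg U R) X j)"
proof -
  interpret regctx U R using assms by unfold_locales auto
  let ?Reg = "Reg U R"
  have meetI: "is_meet_in ?Reg X Y (X \<inter> Y)" if "X \<in> ?Reg" "Y \<in> ?Reg" for X Y
    using meet_reg[OF that] unfolding is_meet_in_def by blast
  have joinI: "is_join_in ?Reg X Y (g (X\<union>Y))" if X: "X \<in> ?Reg" and Y: "Y \<in> ?Reg" for X Y
  proof -
    have "g (X\<union>Y) \<subseteq> Z" if "Z \<in> ?Reg" "X \<subseteq> Z" "Y \<subseteq> Z" for Z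
      using K[OF join_props(1)[OF X Y] that(1)] join_props(4)[OF X Y] that by blast
    then show ?thesis using join_props[OF X Y] unfolding is_join_in_def by blast
  qed
  have meet_eq: "m = X \<inter> Y" if "is_meet_in ?Reg X Y m" "X \<in> ?Reg" "Y \<in> ?Reg" for X Y m
  proof -
    have a: "m \<subseteq> X" "m \<subseteq> Y" using that(1) unfolding is_meet_in_def by auto
    have "X \<inter> Y \<subseteq> m" using that(1) meet_reg[OF that(2,3)] unfolding is_meet_in_def by auto
    then show ?thesis using a by blast
  qed
  have join_eq: "j = g (X\<union>Y)" if "is_join_in ?Reg X Y j" "X \<in> ?Reg" "Y \<in> ?Reg" for X Y j
  proof -
    have a: "j \<in> ?Reg" "X \<subseteq> j" "Y \<subseteq> j" "\<forall>z\<in>?Reg. X \<subseteq> z \<and> Y \<subseteq> z \<longrightarrow> j \<subseteq> z"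
      using that(1) unfolding is_join_in_def by auto
    have b: "g (X\<union>Y) \<in> ?Reg" "X \<subseteq> g (X\<union>Y)" "Y \<subseteq> g (X\<union>Y)"
       "\<forall>z\<in>?Reg. X \<subseteq> z \<and> Y \<subseteq> z \<longrightarrow> g (X\<union>Y) \<subseteq> z"
      using joinI[OF that(2,3)] unfolding is_join_in_def by auto
    show ?thesis using a b by (meson subset_antisym)
  qed
  have semi: "covers_in ?Reg X (g (X\<union>Y))"
    if X: "X \<in> ?Reg" and Y: "Y \<in> ?Reg" and cov: "covers_in ?Reg (X\<inter>Y) Y" for X Y
  proof -
    let ?J = "g (X\<union>Y)"
    have JT: "?J \<inter> T = (X\<union>Y)\<inter>T" using join_props(4)[OF X Y] .
    have "\<not> Y \<subseteq> X \<inter> Y" using cov unfolding covers_in_def by blast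
    then have "\<not> Y \<inter> T \<subseteq> X" using K[OF Y meet_reg[OF X Y]] by blast
    then have ne: "X \<noteq> ?J" using JT by blast
    have nc: "\<not> (X \<subset> c \<and> c \<subset> ?J)" if c: "c \<in> ?Reg" for c
    proof
      assume h: "X \<subset> c \<and> c \<subset> ?J"
      have d: "c \<inter> Y \<in> ?Reg" using meet_reg[OF c Y] .
      have "X \<inter> Y \<subseteq> c \<inter> Y" "c \<inter> Y \<subseteq> Y" using h by blast+
      then have "c \<inter> Y = X \<inter> Y \<or> c \<inter> Y = Y"
        using cov d unfolding covers_in_def by blast
      then show False
      proof
        assume e: "c \<inter> Y = X \<inter> Y"
        have "c \<inter> T \<subseteq> X" using h JT e by blast
        then have "c \<subseteq> X" using K[OF c X] by blast
        then show False using h by blast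
      next
        assume e: "c \<inter> Y = Y"
        have "?J \<inter> T \<subseteq> c" using h JT e by blast
        then have "?J \<subseteq> c" using K[OF join_props(1)[OF X Y] c] by blast
        then show False using h by blast
      qed
    qed
    show ?thesis unfolding covers_in_def
      using X join_props[OF X Y] ne nc by blast
  qed
  show ?thesis
  proof (intro conjI ballI allI impI)
    fix X Y assume "X \<in> ?Reg" "Y \<in> ?Reg"
    then show "\<exists>m. is_meet_in ?Reg X Y m" "\<exists>j. is_join_in ?Reg X Y j"
      using meetI joinI by blast+
  next
    fix X Y m j assume XY: "X \<in> ?Reg" "Y \<in> ?Reg" and m: "is_meet_in ?Reg X Y m"
      and j: "is_join_in ?Reg X Y j" and c: "covers_in ?Reg m Y"
    show "covers_in ?Reg X j"
      using semi[OF XY] c meet_eq[OF m XY] join_eq[OF j XY] by simp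
  qed
qed

end
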